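(* Let $k,t\ge1$ and let $V$ be a word of length $kt$ that has at most $k$ distinct subwords of length $k$. Then $V$ contains a subword of the form $v^t$ for some nonempty word $v$.
   Context: A subword is a contiguous factor. *)

theory Defs
  imports Main "HOL-Library.Sublist"
begin

end

theory Submission
  imports Defs
begin

lemma periodic_concat:
  assumes "c \<ge> 1" "\<forall>m. m + c < length s \<longrightarrow> s ! m = s ! (m + c)" "t * c \<le> length s"
  shows "concat (replicate t (take c s)) = take (t * c) s"
using assms proof (induction t arbitrary: s)
  case 0 then show ?case by simp
next
  case (Suc t)
  let ?s' = "drop c s"
  have p': "\<forall>m. m + c < length ?s' \<longrightarrow> ?s' ! m = ?s' ! (m + c)"
  proof (intro allI impI)
    fix m assume "m + c < length ?s'"
    then have "(c + m) + c < length s" by simp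
    then have "s ! (c + m) = s ! (c + m + c)" using Suc.prems(2) by blast
    then show "?s' ! m = ?s' ! (m + c)" using \<open>(c + m) + c < length s\<close>
      by (simp add: add.commute add.left_commute)
  qed
  have "t * c \<le> length ?s'" using Suc.prems(3) by simp
  then have IH: "concat (replicate t (take c ?s')) = take (t*c) ?s'"
    using Suc.IH[OF Suc.prems(1) p'] by simp
  show ?case
  proof (cases "t = 0")
    case True then show ?thesis by simp
  next
    case False
    then have "2 * c \<le> Suc t * c" by (intro mult_le_mono1) simp
    then have len: "2 * c \<le> length s" using Suc.prems(3) by linarith
    have "take c ?s' = take c s"
    proof (rule nth_equalityI)
      show "length (take c ?s') = length (take c s)" using len by simp
      fix i assume "i < length (take c ?s')"
      then have "i < c" by simp
      then have "i + c < length s" using len by simp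
      then show "take c ?s' ! i = take c s ! i" using Suc.prems(2) \<open>i < c\<close> len
        by (simp add: add.commute)
    qed
    then show ?thesis using IH by (simp add: take_add)
  qed
qed

lemma img_lt: "x < y \<Longrightarrow> f x = f y \<Longrightarrow> f y \<in> f ` {..<y}"
  by (metis image_eqI lessThan_iff)

lemma walk:
  fixes g :: "nat \<Rightarrow> 'b" and e :: "nat \<Rightarrow> 'c" and M :: nat
  assumes det: "\<And>i i'. i < M - 1 \<Longrightarrow> i' < M - 1 \<Longrightarrow> e i = e i' \<Longrightarrow> g i = g i' \<and> g (Suc i) = g (Suc i')"
    and EleD: "card (e ` {..<M-1}) \<le> card (g ` {..<M})"
    and DltM: "card (g ` {..<M}) < M"
  shows "card (e ` {..<M-1}) = card (g ` {..<M}) \<and> (\<exists>a c z. 1 \<le> c \<and> a + c \<le> z \<and> z < M \<and> a + c \<le> card (g ` {..<M})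
     \<and> (\<forall>i. a \<le> i \<longrightarrow> i + c \<le> z \<longrightarrow> g (i + c) = g i) \<and> (\<forall>i. a \<le> i \<longrightarrow> i + c < z \<longrightarrow> e (i + c) = e i)
     \<and> M + c \<le> z - a + 1 + card (g ` {..<M}))"
proof -
  define D where "D = card (g ` {..<M})"
  have ninj: "\<not> inj_on g {..<M}" using DltM card_image by fastforce
  have exb: "\<exists>b. b < M \<and> g b \<in> g ` {..<b}"
  proof -
    from ninj obtain x y where xy: "x < M" "y < M" "x \<noteq> y" "g x = g y" unfolding inj_on_def by auto
    show ?thesis
    proof (cases "x < y")
      case True then have "g y \<in> g ` {..<y}" using xy by (metis image_eqI lessThan_iff)
      then show ?thesis using xy by blast
    next
      case False then have "y < x" using xy by simp
      then have "g x \<in> g ` {..<x}" using xy by (metis image_eqI lessThan_iff)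
      then show ?thesis using xy by blast
    qed
  qed
  define b where "b = (LEAST b. b < M \<and> g b \<in> g ` {..<b})"
  have bP: "b < M \<and> g b \<in> g ` {..<b}" using LeastI_ex[OF exb] b_def by simp
  have bmin: "\<And>b'. b' < b \<Longrightarrow> \<not> (b' < M \<and> g b' \<in> g ` {..<b'})" using not_less_Least b_def by blast
  have injb: "inj_on g {..<b}"
  proof (rule inj_onI)
    fix x y assume xy: "x \<in> {..<b}" "y \<in> {..<b}" "g x = g y"
    show "x = y"
    proof (rule ccontr)
      assume "x \<noteq> y"
      then consider "x < y" | "y < x" by linarith
      then show False
      proof cases
        case 1 then show False using bmin[of y] xy bP img_lt[of x y g] by auto
      next
        case 2 then show False using bmin[of x] xy bP img_lt[of y x g] by auto
      qed
    qed
  qed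
  obtain a where a: "a < b" "g a = g b" using bP by auto
  define c where "c = b - a"
  have c0: "0 < c" "b = a + c" using a c_def by auto
  define FO where "FO = {m. m < M \<and> (\<forall>m'<m. g m' \<noteq> g m)}"
  have injFO: "inj_on g FO"
  proof (rule inj_onI)
    fix x y assume xy: "x \<in> FO" "y \<in> FO" "g x = g y"
    show "x = y"
    proof (rule ccontr)
      assume "x \<noteq> y"
      then consider "x < y" | "y < x" by linarith
      then show False using xy unfolding FO_def by cases auto
    qed
  qed
  have imFO: "g ` FO = g ` {..<M}"
  proof
    show "g ` FO \<subseteq> g ` {..<M}" unfolding FO_def by auto
    show "g ` {..<M} \<subseteq> g ` FO"
    proof
      fix v assume "v \<in> g ` {..<M}"
      then obtain i where i: "i < M" "v = g i" by auto
      define m where "m = (LEAST m. g m = g i)"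
      have m1: "g m = g i" using LeastI[of "\<lambda>m. g m = g i" i] m_def by simp
      have m2: "m \<le> i" using Least_le[of "\<lambda>m. g m = g i" i] m_def by simp
      have m3: "\<forall>m'<m. g m' \<noteq> g m" using not_less_Least m_def m1 by metis
      have "m \<in> FO" using m1 m2 m3 i unfolding FO_def by auto
      then show "v \<in> g ` FO" using m1 i by (metis image_eqI)
    qed
  qed
  have cardFO: "card FO = D" using card_image[OF injFO] imFO D_def by simp
  have finFO: "finite FO" unfolding FO_def by auto
  have bFO: "{..<b} \<subseteq> FO"
  proof
    fix m assume "m \<in> {..<b}"
    then show "m \<in> FO" using injb bP unfolding FO_def inj_on_def by auto
  qed
  have bnFO: "b \<notin> FO" using a unfolding FO_def by auto
  have aFO: "a \<in> FO" using bFO a by auto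
  have zFO: "0 \<in> FO" using bFO a by auto
  have injX: "inj_on (\<lambda>m. e (m - 1)) (FO - {0})"
  proof (rule inj_onI)
    fix m1 m2 assume h: "m1 \<in> FO - {0}" "m2 \<in> FO - {0}" "e (m1 - 1) = e (m2 - 1)"
    then have "m1 - 1 < M - 1" "m2 - 1 < M - 1" unfolding FO_def by auto
    then have "g (Suc (m1 - 1)) = g (Suc (m2 - 1))" using det h(3) by blast
    then have "g m1 = g m2" using h by auto
    then show "m1 = m2" using injFO h unfolding inj_on_def by auto
  qed
  have notin: "e (b - 1) \<notin> (\<lambda>m. e (m - 1)) ` (FO - {0})"
  proof
    assume "e (b - 1) \<in> (\<lambda>m. e (m - 1)) ` (FO - {0})"
    then obtain m where m: "m \<in> FO" "m \<noteq> 0" "e (b - 1) = e (m - 1)" by auto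
    have "b - 1 < M - 1" "m - 1 < M - 1" using bP m a unfolding FO_def by auto
    then have gg: "g (b - 1) = g (m - 1)" "g (Suc (b - 1)) = g (Suc (m - 1))" using det m(3) by blast+
    then have "g b = g m" using m a by auto
    then have "m = a" using injFO m aFO a unfolding inj_on_def by metis
    then have "b - 1 = a - 1" using injb gg(1) a unfolding inj_on_def by auto
    then show False using a m \<open>m = a\<close> by auto
  qed
  define X where "X = insert (e (b - 1)) ((\<lambda>m. e (m - 1)) ` (FO - {0}))"
  have "card X = Suc (card (FO - {0}))"
    unfolding X_def using notin finFO card_insert_disjoint card_image[OF injX] by auto
  also have "card (FO - {0}) = D - 1" using cardFO zFO finFO by simp
  finally have cardX: "card X = D" using zFO finFO cardFO
    by (metis Suc_pred' card_gt_0_iff empty_iff)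
  have XsubE: "X \<subseteq> e ` {..<M-1}"
    unfolding X_def using bP a unfolding FO_def by auto
  have XE: "X = e ` {..<M-1}"
    by (rule card_seteq) (use XsubE cardX EleD D_def in auto)
  have EeqD: "card (e ` {..<M-1}) = D" using XE cardX by simp
  have lab: "\<And>i. i < M - 1 \<Longrightarrow> e i = e (b - 1) \<or> (\<exists>m\<in>FO. m \<noteq> 0 \<and> e i = e (m - 1))"
  proof -
    fix i assume "i < M - 1"
    then have "e i \<in> X" using XE by auto
    then show "e i = e (b - 1) \<or> (\<exists>m\<in>FO. m \<noteq> 0 \<and> e i = e (m - 1))" unfolding X_def by auto
  qed
  define Fb where "Fb = {m \<in> FO. b < m}"
  define y where "y = (if Fb = {} then M - 1 else Min Fb - 1)"
  have finFb: "finite Fb" using finFO Fb_def by simp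
  have y1: "b \<le> y" "y < M"
  proof -
    have "b \<le> y \<and> y < M"
    proof (cases "Fb = {}")
      case True then show ?thesis using bP y_def by auto
    next
      case False
      then have "Min Fb \<in> Fb" using finFb by simp
      then have "b < Min Fb" "Min Fb < M" unfolding Fb_def FO_def by auto
      moreover have "y = Min Fb - 1" using False y_def by simp
      ultimately show ?thesis by linarith
    qed
    then show "b \<le> y" "y < M" by auto
  qed
  have y2: "\<And>m. b < m \<Longrightarrow> m \<le> y \<Longrightarrow> m \<notin> FO"
  proof
    fix m assume h: "b < m" "m \<le> y" "m \<in> FO"
    then have "m \<in> Fb" unfolding Fb_def by auto
    then have "Fb \<noteq> {}" "Min Fb \<le> m" using finFb by auto
    then show False using h y_def by auto
  qed
  have y3: "\<And>r. y < r \<Longrightarrow> r < M \<Longrightarrow> r \<in> FO"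
  proof -
    fix r assume r: "y < r" "r < M"
    then have Fne: "Fb \<noteq> {}" using y_def by (cases "Fb = {}") auto
    then have "Min Fb \<in> Fb" using finFb by simp
    then have "b < Min Fb" "Min Fb \<in> FO" unfolding Fb_def by auto
    moreover have "y = Min Fb - 1" using Fne y_def by simp
    moreover have "Suc y = Min Fb" using calculation by linarith
    ultimately have "Suc y \<in> FO" by simp
    have "\<forall>d. Suc y + d < M \<longrightarrow> Suc y + d \<in> FO"
    proof
      fix d show "Suc y + d < M \<longrightarrow> Suc y + d \<in> FO"
      proof (induction d)
        case 0 then show ?case using \<open>Suc y \<in> FO\<close> by simp
      next
        case (Suc d)
        show ?case
        proof
          assume lt: "Suc y + Suc d < M"
          define r where "r = Suc y + d"
          have rFO: "r \<in> FO" using Suc lt r_def by simp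
          have rM: "r < M - 1" using lt r_def by simp
          have rb: "b < r" using y1 r_def by simp
          have "Suc r \<in> FO"
          proof -
            from lab[OF rM] show ?thesis
            proof
              assume "e r = e (b - 1)"
              moreover have "b - 1 < M - 1" using rb rM by simp
              ultimately have "g r = g (b - 1)" using det rM by blast
              moreover have "b - 1 < r" using rb by simp
              then have "g (b - 1) \<noteq> g r" using rFO unfolding FO_def by blast
              ultimately show ?thesis by simp
            next
              assume "\<exists>m\<in>FO. m \<noteq> 0 \<and> e r = e (m - 1)"
              then obtain m where m: "m \<in> FO" "m \<noteq> 0" "e r = e (m - 1)" by auto
              have "m - 1 < M - 1" using m unfolding FO_def by auto
              then have gg: "g r = g (m - 1)" "g (Suc r) = g (Suc (m - 1))" using det rM m(3) by blast+
              then have gm: "g (Suc r) = g m" using m by simp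
              consider "m = Suc r" | "m < Suc r" | "Suc r < m" by linarith
              then show ?thesis
              proof cases
                case 1 then show ?thesis using m by simp
              next
                case 2 then have "m - 1 < r" using m by simp
                then show ?thesis using gg rFO unfolding FO_def by auto
              next
                case 3 then show ?thesis using gm m unfolding FO_def by auto
              qed
            qed
          qed
          then show "Suc y + Suc d \<in> FO" using r_def by simp
        qed
      qed
    qed
    then show "r \<in> FO" using r by (metis Suc_leI le_add_diff_inverse)
  qed
  define cn where "cn i = a + (i - a) mod c" for i
  have cnb: "\<And>i. a \<le> cn i \<and> cn i < b" unfolding cn_def using c0 by simp
  have cn_low: "\<And>i. a \<le> i \<Longrightarrow> i < b \<Longrightarrow> cn i = i" unfolding cn_def using c0 by simp
  have eclaim: "\<And>i. b \<le> i \<Longrightarrow> i < y \<Longrightarrow> g i = g (cn i) \<Longrightarrow> e i = e (cn i)"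
  proof -
    fix i assume i: "b \<le> i" "i < y" "g i = g (cn i)"
    have iM: "i < M - 1" using i y1 by simp
    obtain q where q: "q < b" "e i = e q"
    proof -
      from lab[OF iM] show ?thesis
      proof
        assume "e i = e (b - 1)" moreover have "b - 1 < b" using a by simp
        ultimately show ?thesis using that by blast
      next
        assume "\<exists>m\<in>FO. m \<noteq> 0 \<and> e i = e (m - 1)"
        then obtain m where m: "m \<in> FO" "m \<noteq> 0" "e i = e (m - 1)" by auto
        have "m - 1 < M - 1" using m unfolding FO_def by auto
        then have "g (Suc i) = g (Suc (m - 1))" using det iM m(3) by blast
        then have gm: "g (Suc i) = g m" using m by simp
        have "\<not> Suc i < m" using gm m unfolding FO_def by auto
        moreover have "Suc i \<notin> FO" using y2[of "Suc i"] i by simp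
        ultimately have "m < Suc i" using m by (cases "m = Suc i") auto
        then have "m \<le> y" using i by simp
        then have "\<not> b < m" using y2 m by blast
        then have "m < b" using bnFO m by (cases "m = b") auto
        then show ?thesis using that[of "m - 1"] m by simp
      qed
    qed
    have "q < M - 1" using q i iM by simp
    then have "g i = g q" using det iM q by blast
    then have "q = cn i" using injb q cnb[of i] i(3) unfolding inj_on_def by auto
    then show "e i = e (cn i)" using q by simp
  qed
  have gclaim: "\<And>i. b \<le> i \<Longrightarrow> i \<le> y \<longrightarrow> g i = g (cn i)"
  proof -
    fix i assume "b \<le> i"
    then show "i \<le> y \<longrightarrow> g i = g (cn i)"
    proof (induction i rule: dec_induct)
      case base
      have "cn b = a" unfolding cn_def using c0 by simp
      then show ?case using a by simp
    next
      case (step n)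
      show ?case
      proof
        assume "Suc n \<le> y"
        then have ny: "n < y" by simp
        then have gn: "g n = g (cn n)" using step by simp
        have en: "e n = e (cn n)" using eclaim[OF step(1) ny gn] .
        have "n < M - 1" "cn n < M - 1" using ny y1 cnb[of n] step(1) by auto
        then have gs: "g (Suc n) = g (Suc (cn n))" using det en by blast
        have na: "Suc n - a = Suc (n - a)" using step(1) a by simp
        show "g (Suc n) = g (cn (Suc n))"
        proof (cases "Suc ((n - a) mod c) = c")
          case True
          then have "cn (Suc n) = a" "Suc (cn n) = b" unfolding cn_def using na mod_Suc c0 by auto
          then show ?thesis using gs a by simp
        next
          case False
          then have "cn (Suc n) = Suc (cn n)" unfolding cn_def using na mod_Suc by auto
          then show ?thesis using gs by simp
        qed
      qed
    qed
  qed
  have gall: "\<And>i. a \<le> i \<Longrightarrow> i \<le> y \<Longrightarrow> g i = g (cn i)"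
    using gclaim cn_low by (metis not_le)
  have eall: "\<And>i. a \<le> i \<Longrightarrow> i < y \<Longrightarrow> e i = e (cn i)"
  proof -
    fix i assume "a \<le> i" "i < y"
    then show "e i = e (cn i)"
      using gclaim eclaim cn_low by (cases "i < b") auto
  qed
  have cnper: "\<And>i. a \<le> i \<Longrightarrow> cn (i + c) = cn i"
  proof -
    fix i assume "a \<le> i"
    then have "i + c - a = (i - a) + c" by simp
    then show "cn (i + c) = cn i" unfolding cn_def by simp
  qed
  have sub: "{..<b} \<union> {y<..<M} \<subseteq> FO" using bFO y3 by auto
  have "card ({..<b} \<union> {y<..<M}) = b + (M - Suc y)"
    using y1 by (subst card_Un_disjoint) auto
  then have cnt: "b + (M - Suc y) \<le> D" using card_mono[OF finFO sub] cardFO by simp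
  have bD: "b \<le> D" using card_mono[OF finFO bFO] cardFO by simp
  show ?thesis
  proof (intro conjI exI)
    show "card (e ` {..<M-1}) = card (g ` {..<M})" using EeqD D_def by simp
    show "1 \<le> c" using c0 by simp
    show "a + c \<le> y" using c0 y1 by simp
    show "y < M" using y1 by simp
    show "a + c \<le> card (g ` {..<M})" using c0 bD D_def by simp
    show "\<forall>i. a \<le> i \<longrightarrow> i + c \<le> y \<longrightarrow> g (i + c) = g i"
      using gall cnper by (metis add_leD1 le_add1 order_trans)
    show "\<forall>i. a \<le> i \<longrightarrow> i + c < y \<longrightarrow> e (i + c) = e i"
      using eall cnper by (metis add_lessD1 le_add1 order_trans)
    show "M + c \<le> y - a + 1 + card (g ` {..<M})" using cnt c0 y1 D_def by simp
  qed
qed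

lemma subl_trans: "sublist x y \<Longrightarrow> sublist y z \<Longrightarrow> sublist x z"
  using sublist_order.order_trans by blast

theorem lemmac:
  fixes V :: "'a list" and k t :: nat
  assumes "k \<ge> 1" and "t \<ge> 1"
    and "length V = k * t"
    and "card {w. sublist w V \<and> length w = k} \<le> k"
  shows "\<exists>v. v \<noteq> [] \<and> sublist (concat (replicate t v)) V"
proof (cases "t = 1")
  case True
  then have "V \<noteq> []" using assms by auto
  then show ?thesis using True by (intro exI[of _ V]) simp
next
  case False
  then have t2: "t \<ge> 2" using assms(2) by simp
  define n where "n = length V"
  define N where "N = n - k + 1"
  have nk: "n = k * t" using assms n_def by simp
  have "k * 2 \<le> k * t" using t2 by (intro mult_le_mono2)
  then have n2k: "2 * k \<le> n" using nk by simp
  have Nk: "k + 1 \<le> N" using n2k N_def by simp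
  define W where "W j = (\<lambda>i. take j (drop i V)) ` {..<N}" for j
  define R where "R j = card (W j)" for j
  have finS: "finite {w. sublist w V \<and> length w = k}"
  proof (rule finite_subset)
    show "{w. sublist w V \<and> length w = k} \<subseteq> set (sublists V)" using set_sublists_eq by auto
  qed simp
  have WkS: "W k \<subseteq> {w. sublist w V \<and> length w = k}"
  proof
    fix w assume "w \<in> W k"
    then obtain i where i: "i < N" "w = take k (drop i V)" unfolding W_def by auto
    have "sublist w V" using i subl_trans[OF sublist_take sublist_drop] by blast
    moreover have "length w = k" using i N_def n_def n2k by auto
    ultimately show "w \<in> {w. sublist w V \<and> length w = k}" by simp
  qed
  have Rk: "R k \<le> k" using card_mono[OF finS WkS] assms(4) R_def by simp
  have Rmono: "\<And>j. j \<le> k \<Longrightarrow> R j \<le> R k"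
  proof -
    fix j assume "j \<le> k"
    then have "W j = take j ` W k" unfolding W_def image_image by (simp add: min_absorb1)
    then show "R j \<le> R k" unfolding R_def by (simp add: card_image_le W_def)
  qed
  have R0: "R 0 = 1"
  proof -
    have "0 \<in> {..<N}" using Nk by simp
    then have "{..<N} \<noteq> {}" by blast
    then have "W 0 = {[]}" unfolding W_def by (simp add: image_constant_conv)
    then show ?thesis unfolding R_def by simp
  qed
  have exj: "\<exists>j<k. R (Suc j) \<le> R j \<and> R (Suc j) \<le> Suc j"
  proof (rule ccontr)
    assume H: "\<not> (\<exists>j<k. R (Suc j) \<le> R j \<and> R (Suc j) \<le> Suc j)"
    have "\<forall>d. d \<le> k \<longrightarrow> R (k - d) \<le> k - d"
    proof
      fix d show "d \<le> k \<longrightarrow> R (k - d) \<le> k - d"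
      proof (induction d)
        case 0 then show ?case using Rk by simp
      next
        case (Suc d)
        show ?case
        proof
          assume dk: "Suc d \<le> k"
          define jj where "jj = k - Suc d"
          have jj: "Suc jj = k - d" "jj < k" using dk jj_def by auto
          have "R (Suc jj) \<le> Suc jj" using Suc dk jj by simp
          then have "R jj < R (Suc jj)" using H jj by (meson not_le)
          then show "R (k - Suc d) \<le> k - Suc d" using \<open>R (Suc jj) \<le> Suc jj\<close> jj_def by simp
        qed
      qed
    qed
    then have "R 0 \<le> 0" by (metis diff_self_eq_0 order_refl)
    then show False using R0 by simp
  qed
  then obtain j where j: "j < k" "R (Suc j) \<le> R j" "R (Suc j) \<le> Suc j" by blast
  define g where "g i = take j (drop i V)" for i
  define e where "e i = take (Suc j) (drop i V)" for i
  have gi: "\<And>i. g i = take j (e i)" unfolding g_def e_def by (simp add: min_absorb1)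
  have gs: "\<And>i. g (Suc i) = drop 1 (e i)" unfolding g_def e_def by (simp add: drop_take)
  have eW: "e ` {..<N} = W (Suc j)" unfolding e_def W_def by simp
  have gW: "g ` {..<Suc N} = insert (g N) (W j)" unfolding g_def W_def lessThan_Suc by simp
  define D where "D = card (g ` {..<Suc N})"
  have finW: "finite (W j)" unfolding W_def by simp
  have D1: "D \<le> Suc (R j)" unfolding D_def R_def gW using card_insert_le_m1 finW
    by (simp add: card_insert_if)
  have D2: "R j \<le> D" unfolding D_def R_def gW using finW by (simp add: card_mono subset_insertI)
  have W1: "card (e ` {..<Suc N - 1}) = card (g ` {..<Suc N}) \<and> (\<exists>a c z. 1 \<le> c \<and> a + c \<le> z \<and> z < Suc N \<and> a + c \<le> card (g ` {..<Suc N})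
     \<and> (\<forall>i. a \<le> i \<longrightarrow> i + c \<le> z \<longrightarrow> g (i + c) = g i) \<and> (\<forall>i. a \<le> i \<longrightarrow> i + c < z \<longrightarrow> e (i + c) = e i)
     \<and> Suc N + c \<le> z - a + 1 + card (g ` {..<Suc N}))"
  proof (rule walk)
    fix i i' assume "e i = e i'"
    then show "g i = g i' \<and> g (Suc i) = g (Suc i')" using gi gs by metis
  next
    show "card (e ` {..<Suc N - 1}) \<le> card (g ` {..<Suc N})"
      using eW j D2 R_def D_def by simp
  next
    show "card (g ` {..<Suc N}) < Suc N"
      using D1 Rmono[of j] j Rk Nk D_def by simp
  qed
  then have DE: "D = R (Suc j)" using eW R_def D_def by simp
  from W1 obtain a c z where P: "1 \<le> c" "a + c \<le> z" "z < Suc N" "a + c \<le> D"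
     "\<forall>i. a \<le> i \<longrightarrow> i + c \<le> z \<longrightarrow> g (i + c) = g i" "\<forall>i. a \<le> i \<longrightarrow> i + c < z \<longrightarrow> e (i + c) = e i"
     "Suc N + c \<le> z - a + 1 + D" unfolding D_def by blast
  have zn: "z + j \<le> n" using P(3) j N_def n2k by simp
  have Nn: "N \<le> n" using N_def assms(1) n2k by simp
  have letter: "\<And>m. a \<le> m \<Longrightarrow> m + c < z + j \<Longrightarrow> V ! m = V ! (m + c)"
  proof -
    fix m assume m: "a \<le> m" "m + c < z + j"
    show "V ! m = V ! (m + c)"
    proof (cases "m + c < z")
      case True
      then have "e (m + c) = e m" using P(6) m by simp
      then have "e (m + c) ! 0 = e m ! 0" by simp
      moreover have "m + c < n" using True P(3) Nn by simp
      ultimately show ?thesis unfolding e_def using n_def by simp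
    next
      case False
      define r where "r = m + c - z"
      have r: "r < j" "m + c = z + r" "m = (z - c) + r" using False m r_def P by auto
      have "a \<le> z - c" "z - c + c \<le> z" using P(2) by auto
      then have "g (z - c + c) = g (z - c)" using P(5) by blast
      then have "g z = g (z - c)" using P by simp
      then have "g z ! r = g (z - c) ! r" by simp
      moreover have "z + r < n" using r zn by simp
      ultimately have "V ! (z + r) = V ! (z - c + r)" unfolding g_def using r n_def P by simp
      then show ?thesis using r by simp
    qed
  qed
  define s where "s = take (z + j - a) (drop a V)"
  have ls: "length s = z + j - a" unfolding s_def using zn n_def P by simp
  have sper: "\<forall>m. m + c < length s \<longrightarrow> s ! m = s ! (m + c)"
  proof (intro allI impI)
    fix m assume "m + c < length s"
    then have h: "a + m + c < z + j" using ls P by simp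
    have "s ! m = V ! (a + m)" unfolding s_def using h zn n_def by simp
    moreover have "s ! (m + c) = V ! (a + m + c)" unfolding s_def using h zn n_def
      by (simp add: add.assoc)
    ultimately show "s ! m = s ! (m + c)" using letter[of "a + m"] h by simp
  qed
  have ck: "c \<le> k" using P(4) DE j by simp
  obtain d where d: "k = c + d" using ck le_iff_add by blast
  have "d \<le> d * t" using assms(2) by simp
  then have ineq: "c * t + k \<le> k * t + c" using d by (simp add: algebra_simps)
  have "N + c \<le> z - a + D" using P(7) by simp
  then have "n - k + c \<le> z + j - a" using DE j N_def P(2) n2k by simp
  then have tc: "t * c \<le> length s" using ls ineq nk by (simp add: mult.commute)
  have eq: "concat (replicate t (take c s)) = take (t * c) s"
    using periodic_concat[OF P(1) sper tc] .
  have "c \<le> t * c" using assms(2) by simp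
  then have "c \<le> length s" using tc by (rule le_trans)
  then have "length (take c s) = c" by simp
  then have "take c s \<noteq> []" using P(1) by auto
  moreover have "sublist (take (t * c) s) V"
    unfolding s_def using subl_trans[OF sublist_take subl_trans[OF sublist_take sublist_drop]] by blast
  ultimately show ?thesis using eq by metis
qed

end
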